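(* For all $\Gamma,\Delta\subseteq\mathcal{L}_{\Box\!\!\rightarrow}$: $(\Gamma,\Delta)\in\mathsf{N4CK}$ iff $(E^\pm(\Gamma),E^\pm(\Delta))\in\mathsf{IntCK}^{e+}$. That is, $E^\pm$ faithfully embeds $\mathsf{N4CK}$ into the extended positive intuitionistic conditional logic $\mathsf{IntCK}^{e+}$.
   Context: $\mathcal{L}_{\Box\!\!\rightarrow}$ is built from variables $p_0,p_1,\dots$ with $\wedge,\vee,\to$, strong negation $\sim$, and a binary would-conditional $\Box\!\!\rightarrow$. A Nelsonian conditional model is $(W,\leq,R,V^+,V^-)$ with $W\neq\emptyset$, $\leq$ a preorder, $V^\pm$ assigning upward-closed sets, $R\subseteq W\times(\mathcal{P}(W)\times\mathcal{P}(W))\times W$ satisfying for all $X,Y$: (c1) $w\leq w'$ and $R_{(X,Y)}(w,v)$ imply $R_{(X,Y)}(w',v')$ for some $v'\geq v$; (c2) $R_{(X,Y)}(w,v)$ and $v\leq v'$ imply $R_{(X,Y)}(w',v')$ for some $w'\geq w$. Verification $\models^+$/falsification $\models^-$: atoms by $V^\pm$; $\wedge$ verified iff both verified, falsified iff one falsified; $\vee$ dually; $\sim$ swaps; $w\models^+\psi\to\chi$ iff for all $v\geq w$, $v\models^+\psi$ implies $v\models^+\chi$; $w\models^-\psi\to\chi$ iff $w\models^+\psi$ and $w\models^-\chi$; $w\models^+\psi\Box\!\!\rightarrow\chi$ iff for all $v\geq w$ and $u$ with $R_{\|\psi\|}(v,u)$, $u\models^+\chi$; $w\models^-\psi\Box\!\!\rightarrow\chi$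 iff some $u$ has $R_{\|\psi\|}(w,u)$ and $u\models^-\chi$; $\|\psi\|=(\{w\mid w\models^+\psi\},\{w\mid w\models^-\psi\})$. $(\Gamma,\Delta)\in\mathsf{N4CK}$ iff no pointed such model verifies all of $\Gamma$ and none of $\Delta$. $\mathsf{IntCK}^{e+}$ is over the language with variables $p_i,q_i$, connectives $\wedge,\vee,\to$, primitive $\Box\!\!\rightarrow,\Diamond\!\!\rightarrow$ (no negation); its models are $(W,\leq,R,V)$ with $\leq$ a preorder, $V$ assigning upward-closed sets, $R\subseteq W\times\mathcal{P}(W)\times W$ such that for all $X$: if $w\leq w'$ and $R_X(w,v)$ then $R_X(w',v')$ for some $v'\geq v$; if $R_X(w,v)$ and $v\leq v'$ then $R_X(w',v')$ for some $w'\geq w$; satisfaction $\models^i$: intuitionistic for $\wedge,\vee,\to$; $w\models^i\psi\Box\!\!\rightarrow\chi$ iff for all $v\geq w$ and $u$ with $R_{\|\psi\|^i}(v,u)$, $u\models^i\chi$; $w\models^i\psi\Diamond\!\!\rightarrow\chi$ iff some $u$ has $R_{\|\psi\|^i}(w,u)$ and $u\models^i\chi$, where $\|\psi\|^i$ is the truth set; $(\Gamma,\Delta)\in\mathsf{IntCK}^{e+}$ iff no pointed model satisfies all of $\Gamma$ and none of $\Delta$. The translation $E^\pm$: $E^\pm(p_i)=p_i$, $E^\pm(\sim p_i)=q_i$, $E^\pm(\phi\wedge\psi)=E^\pm(\phi)\wedge E^\pm(\psi)$, $E^\pm(\sim(\phi\wedge\psi))=E^\pm(\sim\phi)\vee E^\pm(\sim\psi)$,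 $E^\pm(\phi\vee\psi)=E^\pm(\phi)\vee E^\pm(\psi)$, $E^\pm(\sim(\phi\vee\psi))=E^\pm(\sim\phi)\wedge E^\pm(\sim\psi)$, $E^\pm(\sim\sim\phi)=E^\pm(\phi)$, $E^\pm(\phi\to\psi)=E^\pm(\phi)\to E^\pm(\psi)$, $E^\pm(\sim(\phi\to\psi))=E^\pm(\phi)\wedge E^\pm(\sim\psi)$, $E^\pm(\phi\Box\!\!\rightarrow\psi)=E^\pm(\phi)\Box\!\!\rightarrow(E^\pm(\sim\phi)\Box\!\!\rightarrow E^\pm(\psi))$, $E^\pm(\sim(\phi\Box\!\!\rightarrow\psi))=E^\pm(\phi)\Diamond\!\!\rightarrow(E^\pm(\sim\phi)\Diamond\!\!\rightarrow E^\pm(\sim\psi))$. *)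

theory Defs
  imports Main
begin

datatype nform =
    NVar nat
  | NNeg nform
  | NAnd nform nform
  | NOr nform nform
  | NImp nform nform
  | NBox nform nform

datatype iform =
    IP nat
  | IQ nat
  | IAnd iform iform
  | IOr iform iform
  | IImp iform iform
  | IBox iform iform
  | IDia iform iform

text \<open>Etr phi is E(phi); Etrn phi is E(~phi).\<close>
fun Etr :: "nform \<Rightarrow> iform" and Etrn :: "nform \<Rightarrow> iform" where
  "Etr (NVar i) = IP i"
| "Etr (NNeg a) = Etrn a"
| "Etr (NAnd a b) = IAnd (Etr a) (Etr b)"
| "Etr (NOr a b) = IOr (Etr a) (Etr b)"
| "Etr (NImp a b) = IImp (Etr a) (Etr b)"
| "Etr (NBox a b) = IBox (Etr a) (IBox (Etrn a) (Etr b))"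
| "Etrn (NVar i) = IQ i"
| "Etrn (NNeg a) = Etr a"
| "Etrn (NAnd a b) = IOr (Etrn a) (Etrn b)"
| "Etrn (NOr a b) = IAnd (Etrn a) (Etrn b)"
| "Etrn (NImp a b) = IAnd (Etr a) (Etrn b)"
| "Etrn (NBox a b) = IDia (Etr a) (IDia (Etrn a) (Etrn b))"

text \<open>The set of worlds W is the (nonempty) universe of the type 'w.
  le is the preorder, R (X,Y) w v is R_{(X,Y)}(w,v).\<close>
definition n4_model ::
  "('w \<Rightarrow> 'w \<Rightarrow> bool) \<Rightarrow> ('w set \<times> 'w set \<Rightarrow> 'w \<Rightarrow> 'w \<Rightarrow> bool)
   \<Rightarrow> (nat \<Rightarrow> 'w set) \<Rightarrow> (nat \<Rightarrow> 'w set) \<Rightarrow> bool" where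
  "n4_model le R Vp Vn \<longleftrightarrow>
     (\<forall>w. le w w) \<and> (\<forall>u v w. le u v \<longrightarrow> le v w \<longrightarrow> le u w) \<and>
     (\<forall>i w w'. w \<in> Vp i \<longrightarrow> le w w' \<longrightarrow> w' \<in> Vp i) \<and>
     (\<forall>i w w'. w \<in> Vn i \<longrightarrow> le w w' \<longrightarrow> w' \<in> Vn i) \<and>
     (\<forall>X w w' v. le w w' \<longrightarrow> R X w v \<longrightarrow> (\<exists>v'. le v v' \<and> R X w' v')) \<and>
     (\<forall>X w v v'. R X w v \<longrightarrow> le v v' \<longrightarrow> (\<exists>w'. le w w' \<and> R X w' v'))"

text \<open>nsat ... True w phi is verification, nsat ... False w phi is falsification.\<close>
fun nsat ::
  "('w \<Rightarrow> 'w \<Rightarrow> bool) \<Rightarrow> ('w set \<times> 'w set \<Rightarrow> 'w \<Rightarrow> 'w \<Rightarrow> bool)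
   \<Rightarrow> (nat \<Rightarrow> 'w set) \<Rightarrow> (nat \<Rightarrow> 'w set) \<Rightarrow> bool \<Rightarrow> 'w \<Rightarrow> nform \<Rightarrow> bool" where
  "nsat le R Vp Vn True w (NVar i) = (w \<in> Vp i)"
| "nsat le R Vp Vn False w (NVar i) = (w \<in> Vn i)"
| "nsat le R Vp Vn True w (NNeg a) = nsat le R Vp Vn False w a"
| "nsat le R Vp Vn False w (NNeg a) = nsat le R Vp Vn True w a"
| "nsat le R Vp Vn True w (NAnd a b) = (nsat le R Vp Vn True w a \<and> nsat le R Vp Vn True w b)"
| "nsat le R Vp Vn False w (NAnd a b) = (nsat le R Vp Vn False w a \<or> nsat le R Vp Vn False w b)"
| "nsat le R Vp Vn True w (NOr a b) = (nsat le R Vp Vn True w a \<or> nsat le R Vp Vn True w b)"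
| "nsat le R Vp Vn False w (NOr a b) = (nsat le R Vp Vn False w a \<and> nsat le R Vp Vn False w b)"
| "nsat le R Vp Vn True w (NImp a b) =
     (\<forall>v. le w v \<longrightarrow> nsat le R Vp Vn True v a \<longrightarrow> nsat le R Vp Vn True v b)"
| "nsat le R Vp Vn False w (NImp a b) = (nsat le R Vp Vn True w a \<and> nsat le R Vp Vn False w b)"
| "nsat le R Vp Vn True w (NBox a b) =
     (\<forall>v u. le w v \<longrightarrow>
        R ({x. nsat le R Vp Vn True x a}, {x. nsat le R Vp Vn False x a}) v u \<longrightarrow>
        nsat le R Vp Vn True u b)"
| "nsat le R Vp Vn False w (NBox a b) =
     (\<exists>u. R ({x. nsat le R Vp Vn True x a}, {x. nsat le R Vp Vn False x a}) w u \<and>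
        nsat le R Vp Vn False u b)"

definition N4CK :: "'w itself \<Rightarrow> nform set \<Rightarrow> nform set \<Rightarrow> bool" where
  "N4CK _ \<Gamma> \<Delta> \<longleftrightarrow>
     \<not> (\<exists>(le :: 'w \<Rightarrow> 'w \<Rightarrow> bool) R Vp Vn w. n4_model le R Vp Vn \<and>
          (\<forall>\<phi>\<in>\<Gamma>. nsat le R Vp Vn True w \<phi>) \<and> (\<forall>\<phi>\<in>\<Delta>. \<not> nsat le R Vp Vn True w \<phi>))"

definition ick_model ::
  "('w \<Rightarrow> 'w \<Rightarrow> bool) \<Rightarrow> ('w set \<Rightarrow> 'w \<Rightarrow> 'w \<Rightarrow> bool)
   \<Rightarrow> (nat \<Rightarrow> 'w set) \<Rightarrow> (nat \<Rightarrow> 'w set) \<Rightarrow> bool" where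
  "ick_model le R Vp Vq \<longleftrightarrow>
     (\<forall>w. le w w) \<and> (\<forall>u v w. le u v \<longrightarrow> le v w \<longrightarrow> le u w) \<and>
     (\<forall>i w w'. w \<in> Vp i \<longrightarrow> le w w' \<longrightarrow> w' \<in> Vp i) \<and>
     (\<forall>i w w'. w \<in> Vq i \<longrightarrow> le w w' \<longrightarrow> w' \<in> Vq i) \<and>
     (\<forall>X w w' v. le w w' \<longrightarrow> R X w v \<longrightarrow> (\<exists>v'. le v v' \<and> R X w' v')) \<and>
     (\<forall>X w v v'. R X w v \<longrightarrow> le v v' \<longrightarrow> (\<exists>w'. le w w' \<and> R X w' v'))"

fun isat ::
  "('w \<Rightarrow> 'w \<Rightarrow> bool) \<Rightarrow> ('w set \<Rightarrow> 'w \<Rightarrow> 'w \<Rightarrow> bool)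
   \<Rightarrow> (nat \<Rightarrow> 'w set) \<Rightarrow> (nat \<Rightarrow> 'w set) \<Rightarrow> 'w \<Rightarrow> iform \<Rightarrow> bool" where
  "isat le R Vp Vq w (IP i) = (w \<in> Vp i)"
| "isat le R Vp Vq w (IQ i) = (w \<in> Vq i)"
| "isat le R Vp Vq w (IAnd a b) = (isat le R Vp Vq w a \<and> isat le R Vp Vq w b)"
| "isat le R Vp Vq w (IOr a b) = (isat le R Vp Vq w a \<or> isat le R Vp Vq w b)"
| "isat le R Vp Vq w (IImp a b) =
     (\<forall>v. le w v \<longrightarrow> isat le R Vp Vq v a \<longrightarrow> isat le R Vp Vq v b)"
| "isat le R Vp Vq w (IBox a b) =
     (\<forall>v u. le w v \<longrightarrow> R {x. isat le R Vp Vq x a} v u \<longrightarrow> isat le R Vp Vq u b)"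
| "isat le R Vp Vq w (IDia a b) =
     (\<exists>u. R {x. isat le R Vp Vq x a} w u \<and> isat le R Vp Vq u b)"

definition IntCK :: "'w itself \<Rightarrow> iform set \<Rightarrow> iform set \<Rightarrow> bool" where
  "IntCK _ \<Gamma> \<Delta> \<longleftrightarrow>
     \<not> (\<exists>(le :: 'w \<Rightarrow> 'w \<Rightarrow> bool) R Vp Vq w. ick_model le R Vp Vq \<and>
          (\<forall>\<phi>\<in>\<Gamma>. isat le R Vp Vq w \<phi>) \<and> (\<forall>\<phi>\<in>\<Delta>. \<not> isat le R Vp Vq w \<phi>))"

end

theory Submission
  imports Defs
begin

definition compR :: "('w set \<Rightarrow> 'w \<Rightarrow> 'w \<Rightarrow> bool) \<Rightarrow> ('w set \<times> 'w set \<Rightarrow> 'w \<Rightarrow> 'w \<Rightarrow> bool)" where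
  "compR R = (\<lambda>XY w v. \<exists>m. R (fst XY) w m \<and> R (snd XY) m v)"

lemma dir1_equiv:
  assumes M: "ick_model le R Vp Vq"
  shows "(nsat le (compR R) Vp Vq True x \<phi> = isat le R Vp Vq x (Etr \<phi>)) \<and>
         (nsat le (compR R) Vp Vq False x \<phi> = isat le R Vp Vq x (Etrn \<phi>))"
proof (induction \<phi> arbitrary: x)
  case (NBox a b)
  have refl: "\<And>w. le w w" and tr: "\<And>u v w. le u v \<Longrightarrow> le v w \<Longrightarrow> le u w"
    and c2: "\<And>X w v v'. R X w v \<Longrightarrow> le v v' \<Longrightarrow> \<exists>w'. le w w' \<and> R X w' v'"
    using M unfolding ick_model_def by blast+
  have ea: "{y. nsat le (compR R) Vp Vq True y a} = {y. isat le R Vp Vq y (Etr a)}"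
    "{y. nsat le (compR R) Vp Vq False y a} = {y. isat le R Vp Vq y (Etrn a)}"
    using NBox.IH(1) by auto
  define A where "A = {y. isat le R Vp Vq y (Etr a)}"
  define B where "B = {y. isat le R Vp Vq y (Etrn a)}"
  have T: "nsat le (compR R) Vp Vq True x (NBox a b) = isat le R Vp Vq x (Etr (NBox a b))"
  proof
    assume H: "nsat le (compR R) Vp Vq True x (NBox a b)"
    show "isat le R Vp Vq x (Etr (NBox a b))"
    proof (simp only: Etr.simps isat.simps, fold A_def B_def, intro allI impI)
      fix v u v' u'
      assume "le x v" "R A v u" "le u v'" "R B v' u'"
      then obtain v'' where "le v v''" "R A v'' v'" using c2 by blast
      with \<open>le x v\<close> have "le x v''" using tr by blast
      have H': "\<And>v u. le x v \<Longrightarrow> compR R (A, B) v u \<Longrightarrow> nsat le (compR R) Vp Vq True u b"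
        using H by (simp add: ea A_def B_def)
      have "compR R (A, B) v'' u'" using \<open>R A v'' v'\<close> \<open>R B v' u'\<close> unfolding compR_def by auto
      with H' \<open>le x v''\<close> show "isat le R Vp Vq u' (Etr b)"
        using NBox.IH(2) by blast
    qed
  next
    assume H: "isat le R Vp Vq x (Etr (NBox a b))"
    show "nsat le (compR R) Vp Vq True x (NBox a b)"
    proof (simp only: nsat.simps ea, fold A_def B_def, intro allI impI)
      fix v u assume "le x v" "compR R (A, B) v u"
      then obtain m where "R A v m" "R B m u" by (auto simp: compR_def)
      have H': "\<forall>v u. le x v \<longrightarrow> R A v u \<longrightarrow> (\<forall>v' u'. le u v' \<longrightarrow> R B v' u' \<longrightarrow> isat le R Vp Vq u' (Etr b))"
        using H unfolding A_def B_def by (simp only: Etr.simps isat.simps)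
      have "isat le R Vp Vq u (Etr b)"
        using H' \<open>le x v\<close> \<open>R A v m\<close> refl[of m] \<open>R B m u\<close> by blast
      then show "nsat le (compR R) Vp Vq True u b" using NBox.IH(2) by blast
    qed
  qed
  have F: "nsat le (compR R) Vp Vq False x (NBox a b) = isat le R Vp Vq x (Etrn (NBox a b))"
  proof (simp only: nsat.simps ea Etrn.simps isat.simps, fold A_def B_def)
    show "(\<exists>u. compR R (A, B) x u \<and> nsat le (compR R) Vp Vq False u b) =
      (\<exists>u. R A x u \<and> (\<exists>ua. R B u ua \<and> isat le R Vp Vq ua (Etrn b)))"
    proof -
      have IHb: "\<And>y. nsat le (compR R) Vp Vq False y b = isat le R Vp Vq y (Etrn b)"
        using NBox.IH(2) by blast
      show ?thesis unfolding IHb unfolding compR_def fst_conv snd_conv by blast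
    qed
  qed
  show ?case using T F by blast
qed auto

lemma dir1:
  assumes "N4CK TYPE('w) \<Gamma> \<Delta>"
  shows "IntCK TYPE('w) (Etr ` \<Gamma>) (Etr ` \<Delta>)"
  unfolding IntCK_def
proof (rule notI, elim exE conjE)
  fix le :: "'w \<Rightarrow> 'w \<Rightarrow> bool" and R Vp Vq w
  assume M: "ick_model le R Vp Vq"
    and G: "\<forall>\<phi>\<in>Etr ` \<Gamma>. isat le R Vp Vq w \<phi>" and D: "\<forall>\<phi>\<in>Etr ` \<Delta>. \<not> isat le R Vp Vq w \<phi>"
  have M': "n4_model le (compR R) Vp Vq"
  proof -
    have c1: "\<And>X w w' v. le w w' \<Longrightarrow> R X w v \<Longrightarrow> \<exists>v'. le v v' \<and> R X w' v'"
      and c2: "\<And>X w v v'. R X w v \<Longrightarrow> le v v' \<Longrightarrow> \<exists>w'. le w w' \<and> R X w' v'"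
      using M unfolding ick_model_def by blast+
    have "le w w' \<Longrightarrow> compR R X w v \<Longrightarrow> \<exists>v'. le v v' \<and> compR R X w' v'" for X w w' v
    proof -
      assume "le w w'" "compR R X w v"
      then obtain m where "R (fst X) w m" "R (snd X) m v" unfolding compR_def by blast
      then obtain m' where "le m m'" "R (fst X) w' m'" using c1 \<open>le w w'\<close> by blast
      then obtain v' where "le v v'" "R (snd X) m' v'" using c1 \<open>R (snd X) m v\<close> by blast
      then show ?thesis using \<open>R (fst X) w' m'\<close> unfolding compR_def by blast
    qed
    moreover have "compR R X w v \<Longrightarrow> le v v' \<Longrightarrow> \<exists>w'. le w w' \<and> compR R X w' v'" for X w v v'
    proof -
      assume "compR R X w v" "le v v'"
      then obtain m where "R (fst X) w m" "R (snd X) m v" unfolding compR_def by blast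
      then obtain m' where "le m m'" "R (snd X) m' v'" using c2 \<open>le v v'\<close> by blast
      then obtain w' where "le w w'" "R (fst X) w' m'" using c2 \<open>R (fst X) w m\<close> by blast
      then show ?thesis using \<open>R (snd X) m' v'\<close> unfolding compR_def by blast
    qed
    moreover have "(\<forall>w. le w w) \<and> (\<forall>u v w. le u v \<longrightarrow> le v w \<longrightarrow> le u w) \<and>
     (\<forall>i w w'. w \<in> Vp i \<longrightarrow> le w w' \<longrightarrow> w' \<in> Vp i) \<and>
     (\<forall>i w w'. w \<in> Vq i \<longrightarrow> le w w' \<longrightarrow> w' \<in> Vq i)"
      using M unfolding ick_model_def by (elim conjE) (intro conjI)
    ultimately show ?thesis unfolding n4_model_def
      by (elim conjE) (intro conjI allI impI; assumption?; blast)
  qed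
  have E: "\<And>\<phi>. nsat le (compR R) Vp Vq True w \<phi> = isat le R Vp Vq w (Etr \<phi>)"
    using dir1_equiv[OF M] by blast
  have 1: "\<forall>\<phi>\<in>\<Gamma>. nsat le (compR R) Vp Vq True w \<phi>"
  proof
    fix \<phi> assume "\<phi> \<in> \<Gamma>"
    then have "Etr \<phi> \<in> Etr ` \<Gamma>" by (rule imageI)
    then show "nsat le (compR R) Vp Vq True w \<phi>" using G E by blast
  qed
  have 2: "\<forall>\<phi>\<in>\<Delta>. \<not> nsat le (compR R) Vp Vq True w \<phi>"
  proof
    fix \<phi> assume "\<phi> \<in> \<Delta>"
    then have "Etr \<phi> \<in> Etr ` \<Delta>" by (rule imageI)
    then show "\<not> nsat le (compR R) Vp Vq True w \<phi>" using D E by blast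
  qed
  show False
    apply (rule notE[OF assms[unfolded N4CK_def]])
    apply (rule exI[of _ le], rule exI[of _ "compR R"], rule exI[of _ Vp],
        rule exI[of _ Vq], rule exI[of _ w])
    using M' 1 2 by (intro conjI)
qed

fun leI :: "('w \<Rightarrow> 'w \<Rightarrow> bool) \<Rightarrow> 'w + 'w \<times> 'w set \<Rightarrow> 'w + 'w \<times> 'w set \<Rightarrow> bool" where
  "leI le (Inl a) (Inl b) = le a b"
| "leI le (Inr (a, X)) (Inr (b, Y)) = (le a b \<and> X = Y)"
| "leI le _ _ = False"

lemma sum_pair_cases: obtains (L) a where "x = Inl a" | (R) a X where "x = Inr (a, X)"
  by (cases x) auto

lemma leI_Inl: "leI le (Inl x) v = (\<exists>v'. v = Inl v' \<and> le x v')"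
  by (cases v) auto

definition RI :: "('w set \<times> 'w set \<Rightarrow> 'w \<Rightarrow> 'w \<Rightarrow> bool) \<Rightarrow> ('w + 'w \<times> 'w set) set
   \<Rightarrow> 'w + 'w \<times> 'w set \<Rightarrow> 'w + 'w \<times> 'w set \<Rightarrow> bool" where
  "RI R Z x y = (case x of Inl v \<Rightarrow> y = Inr (v, {w. Inl w \<in> Z})
      | Inr (v, X0) \<Rightarrow> (\<exists>u. y = Inl u \<and> R (X0, {w. Inl w \<in> Z}) v u))"

lemma RI_Inl: "RI R Z (Inl v) y = (y = Inr (v, {w. Inl w \<in> Z}))"
  unfolding RI_def by simp

lemma RI_Inr: "RI R Z (Inr (v, X0)) y = (\<exists>u. y = Inl u \<and> R (X0, {w. Inl w \<in> Z}) v u)"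
  unfolding RI_def by simp

lemma dir2_equiv:
  assumes M: "n4_model le R Vp Vn"
  shows "(isat (leI le) (RI R) (\<lambda>i. Inl ` Vp i) (\<lambda>i. Inl ` Vn i) (Inl x) (Etr \<phi>) = nsat le R Vp Vn True x \<phi>) \<and>
         (isat (leI le) (RI R) (\<lambda>i. Inl ` Vp i) (\<lambda>i. Inl ` Vn i) (Inl x) (Etrn \<phi>) = nsat le R Vp Vn False x \<phi>)"
proof (induction \<phi> arbitrary: x)
  case (NBox a b)
  have refl: "\<And>w. le w w" and tr: "\<And>u v w. le u v \<Longrightarrow> le v w \<Longrightarrow> le u w"
    using M unfolding n4_model_def by blast+
  let ?I = "isat (leI le) (RI R) (\<lambda>i. Inl ` Vp i) (\<lambda>i. Inl ` Vn i)"
  have ea: "{y. ?I (Inl y) (Etr a)} = {y. nsat le R Vp Vn True y a}"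
    "{y. ?I (Inl y) (Etrn a)} = {y. nsat le R Vp Vn False y a}"
    using NBox.IH(1) by auto
  define A where "A = {y. nsat le R Vp Vn True y a}"
  define B where "B = {y. nsat le R Vp Vn False y a}"
  have T: "?I (Inl x) (Etr (NBox a b)) = nsat le R Vp Vn True x (NBox a b)"
  proof
    assume H: "?I (Inl x) (Etr (NBox a b))"
    show "nsat le R Vp Vn True x (NBox a b)"
    proof (simp only: nsat.simps, fold A_def B_def, intro allI impI)
      fix v u assume "le x v" "R (A, B) v u"
      have "leI le (Inl x) (Inl v)" using \<open>le x v\<close> by simp
      moreover have "RI R {z. ?I z (Etr a)} (Inl v) (Inr (v, A))"
        by (simp add: RI_Inl ea A_def)
      moreover have "leI le (Inr (v, A)) (Inr (v, A))" using refl by simp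
      moreover have "RI R {z. ?I z (Etrn a)} (Inr (v, A)) (Inl u)"
        using \<open>R (A, B) v u\<close> by (simp add: RI_Inr ea B_def)
      ultimately have "?I (Inl u) (Etr b)" using H by (simp only: Etr.simps isat.simps; blast)
      then show "nsat le R Vp Vn True u b" using NBox.IH(2) by blast
    qed
  next
    assume H: "nsat le R Vp Vn True x (NBox a b)"
    show "?I (Inl x) (Etr (NBox a b))"
    proof (simp only: Etr.simps isat.simps, intro allI impI)
      fix v u v' u'
      assume 1: "leI le (Inl x) v" and 2: "RI R {z. ?I z (Etr a)} v u"
        and 3: "leI le u v'" and 4: "RI R {z. ?I z (Etrn a)} v' u'"
      from 1 obtain v0 where v: "v = Inl v0" "le x v0" by (cases v) auto
      with 2 have u: "u = Inr (v0, A)" by (simp add: RI_Inl ea A_def)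
      with 3 obtain v1 where v': "v' = Inr (v1, A)" "le v0 v1"
        by (cases v') auto
      with 4 obtain u0 where u': "u' = Inl u0" "R (A, B) v1 u0"
        by (auto simp add: RI_Inr ea B_def)
      have "le x v1" using tr v(2) v'(2) by blast
      with H u' have "nsat le R Vp Vn True u0 b" by (simp add: A_def B_def)
      then show "?I u' (Etr b)" using u' NBox.IH(2) by blast
    qed
  qed
  have F: "?I (Inl x) (Etrn (NBox a b)) = nsat le R Vp Vn False x (NBox a b)"
  proof
    assume "?I (Inl x) (Etrn (NBox a b))"
    then obtain u u' where 2: "RI R {z. ?I z (Etr a)} (Inl x) u"
      and 4: "RI R {z. ?I z (Etrn a)} u u'" and 5: "?I u' (Etrn b)" by auto
    from 2 have u: "u = Inr (x, A)" by (simp add: RI_Inl ea A_def)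
    with 4 obtain u0 where u': "u' = Inl u0" "R (A, B) x u0"
      by (auto simp add: RI_Inr ea B_def)
    then show "nsat le R Vp Vn False x (NBox a b)" using 5 NBox.IH(2)
      by (auto simp: A_def B_def)
  next
    assume "nsat le R Vp Vn False x (NBox a b)"
    then obtain u0 where "R (A, B) x u0" "nsat le R Vp Vn False u0 b"
      by (auto simp: A_def B_def)
    moreover have "RI R {z. ?I z (Etr a)} (Inl x) (Inr (x, A))"
      by (simp add: RI_Inl ea A_def)
    moreover have "RI R {z. ?I z (Etrn a)} (Inr (x, A)) (Inl u0)" if "R (A, B) x u0"
      using that by (simp add: RI_Inr ea B_def)
    ultimately show "?I (Inl x) (Etrn (NBox a b))" using NBox.IH(2) by auto
  qed
  show ?case using T F by blast
next
  case (NImp a b)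
  then show ?case by (auto simp: leI_Inl)
qed (auto simp: image_iff)

lemma leI_Inr: "leI le (Inr (a, X)) v = (\<exists>b. v = Inr (b, X) \<and> le a b)"
  by (cases v rule: sum_pair_cases) auto

lemma up_Inl:
  assumes up: "\<And>w w'. w \<in> V \<Longrightarrow> le w w' \<Longrightarrow> w' \<in> V"
    and xin: "x \<in> Inl ` V" and xx: "leI le x x'"
  shows "x' \<in> Inl ` V"
proof -
  from xin obtain a where a: "x = Inl a" "a \<in> V" by blast
  with xx obtain b where "x' = Inl b" "le a b" by (auto simp: leI_Inl)
  with a up show ?thesis by blast
qed

lemma ick_model_I:
  assumes M: "n4_model le R Vp Vn"
  shows "ick_model (leI le) (RI R) (\<lambda>i. Inl ` Vp i) (\<lambda>i. Inl ` Vn i)"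
proof -
  have refl: "\<And>w. le w w" and tr: "\<And>u v w. le u v \<Longrightarrow> le v w \<Longrightarrow> le u w"
    and c1: "\<And>X w w' v. le w w' \<Longrightarrow> R X w v \<Longrightarrow> \<exists>v'. le v v' \<and> R X w' v'"
    and c2: "\<And>X w v v'. R X w v \<Longrightarrow> le v v' \<Longrightarrow> \<exists>w'. le w w' \<and> R X w' v'"
    and up1: "\<And>i w w'. w \<in> Vp i \<Longrightarrow> le w w' \<Longrightarrow> w' \<in> Vp i"
    and up2: "\<And>i w w'. w \<in> Vn i \<Longrightarrow> le w w' \<Longrightarrow> w' \<in> Vn i"
    using M unfolding n4_model_def by blast+
  have P1: "leI le x x" for x
    by (cases x rule: sum_pair_cases) (simp_all add: refl)
  have P2: "leI le x z" if xy: "leI le x y" and yz: "leI le y z" for x y z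
  proof (cases x rule: sum_pair_cases)
    case (L a)
    then obtain b where "y = Inl b" "le a b" using xy by (auto simp: leI_Inl)
    moreover then obtain c where "z = Inl c" "le b c" using yz by (auto simp: leI_Inl)
    ultimately show ?thesis using L tr[of a b c] by simp
  next
    case (R a X)
    then obtain b where "y = Inr (b, X)" "le a b" using xy by (auto simp: leI_Inr)
    moreover then obtain c where "z = Inr (c, X)" "le b c" using yz by (auto simp: leI_Inr)
    ultimately show ?thesis using R tr[of a b c] by simp
  qed
  have P3a: "x' \<in> Inl ` Vp i" if "x \<in> Inl ` Vp i" "leI le x x'" for i x x'
    using up_Inl[of "Vp i" le, OF _ that] up1 by blast
  have P3b: "x' \<in> Inl ` Vn i" if "x \<in> Inl ` Vn i" "leI le x x'" for i x x'
    using up_Inl[of "Vn i" le, OF _ that] up2 by blast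
  have P5: "\<exists>v'. leI le v v' \<and> RI R Z x' v'" if H: "leI le x x'" "RI R Z x v" for Z x x' v
  proof (cases x rule: sum_pair_cases)
    case (L a)
    with H obtain a' where a': "x' = Inl a'" "le a a'" by (auto simp: leI_Inl)
    from H(2) L have "v = Inr (a, {w. Inl w \<in> Z})" by (simp add: RI_Inl)
    then show ?thesis using a'
      by (intro exI[of _ "Inr (a', {w. Inl w \<in> Z})"]) (simp add: RI_Inl)
  next
    case (R a X0)
    with H obtain a' where x': "x' = Inr (a', X0)" "le a a'" by (auto simp: leI_Inr)
    from H(2) R obtain u where u: "v = Inl u" "R (X0, {w. Inl w \<in> Z}) a u"
      by (auto simp: RI_Inr)
    then obtain u' where "le u u'" "R (X0, {w. Inl w \<in> Z}) a' u'" using c1 x'(2) by blast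
    then show ?thesis using x' u by (intro exI[of _ "Inl u'"]) (simp add: RI_Inr)
  qed
  have P6: "\<exists>x'. leI le x x' \<and> RI R Z x' v'" if H: "RI R Z x v" "leI le v v'" for Z x v v'
  proof (cases x rule: sum_pair_cases)
    case (L a)
    with H have v: "v = Inr (a, {w. Inl w \<in> Z})" by (simp add: RI_Inl)
    with H obtain a' where "v' = Inr (a', {w. Inl w \<in> Z})" "le a a'" by (auto simp: leI_Inr)
    then show ?thesis using L
      by (intro exI[of _ "Inl a'"]) (simp add: RI_Inl)
  next
    case (R a X0)
    from H R obtain u where u: "v = Inl u" "R (X0, {w. Inl w \<in> Z}) a u"
      by (auto simp: RI_Inr)
    with H obtain u' where "v' = Inl u'" "le u u'" by (auto simp: leI_Inl)
    moreover obtain a' where "le a a'" "R (X0, {w. Inl w \<in> Z}) a' u'"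
      using c2 u(2) \<open>le u u'\<close> by blast
    ultimately show ?thesis using R by (intro exI[of _ "Inr (a', X0)"]) (simp add: RI_Inr)
  qed
  show ?thesis unfolding ick_model_def
    apply (intro conjI allI impI)
         apply (rule P1)
        apply (rule P2; assumption)
       apply (rule P3a; assumption)
      apply (rule P3b; assumption)
     apply (rule P5; assumption)
    apply (rule P6; assumption)
    done
qed

lemma dir2:
  assumes "IntCK TYPE('w + 'w \<times> 'w set) (Etr ` \<Gamma>) (Etr ` \<Delta>)"
  shows "N4CK TYPE('w) \<Gamma> \<Delta>"
  unfolding N4CK_def
proof (rule notI, elim exE conjE)
  fix le :: "'w \<Rightarrow> 'w \<Rightarrow> bool" and R Vp Vn w
  assume M: "n4_model le R Vp Vn"
    and G: "\<forall>\<phi>\<in>\<Gamma>. nsat le R Vp Vn True w \<phi>" and D: "\<forall>\<phi>\<in>\<Delta>. \<not> nsat le R Vp Vn True w \<phi>"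
  have refl: "\<And>w. le w w" and tr: "\<And>u v w. le u v \<Longrightarrow> le v w \<Longrightarrow> le u w"
    and c1: "\<And>X w w' v. le w w' \<Longrightarrow> R X w v \<Longrightarrow> \<exists>v'. le v v' \<and> R X w' v'"
    and c2: "\<And>X w v v'. R X w v \<Longrightarrow> le v v' \<Longrightarrow> \<exists>w'. le w w' \<and> R X w' v'"
    and up1: "\<And>i w w'. w \<in> Vp i \<Longrightarrow> le w w' \<Longrightarrow> w' \<in> Vp i"
    and up2: "\<And>i w w'. w \<in> Vn i \<Longrightarrow> le w w' \<Longrightarrow> w' \<in> Vn i"
    using M unfolding n4_model_def by blast+
  have M': "ick_model (leI le) (RI R) (\<lambda>i. Inl ` Vp i) (\<lambda>i. Inl ` Vn i)"
    using M by (rule ick_model_I)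
  have "(\<forall>\<phi>\<in>Etr ` \<Gamma>. isat (leI le) (RI R) (\<lambda>i. Inl ` Vp i) (\<lambda>i. Inl ` Vn i) (Inl w) \<phi>) \<and>
        (\<forall>\<phi>\<in>Etr ` \<Delta>. \<not> isat (leI le) (RI R) (\<lambda>i. Inl ` Vp i) (\<lambda>i. Inl ` Vn i) (Inl w) \<phi>)"
  proof -
    have E: "\<And>\<phi>. isat (leI le) (RI R) (\<lambda>i. Inl ` Vp i) (\<lambda>i. Inl ` Vn i) (Inl w) (Etr \<phi>) = nsat le R Vp Vn True w \<phi>"
      using dir2_equiv[OF M] by blast
    have 1: "\<forall>\<phi>\<in>Etr ` \<Gamma>. isat (leI le) (RI R) (\<lambda>i. Inl ` Vp i) (\<lambda>i. Inl ` Vn i) (Inl w) \<phi>"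
    proof
      fix \<psi> assume "\<psi> \<in> Etr ` \<Gamma>"
      then obtain \<phi> where "\<phi> \<in> \<Gamma>" "\<psi> = Etr \<phi>" by blast
      then show "isat (leI le) (RI R) (\<lambda>i. Inl ` Vp i) (\<lambda>i. Inl ` Vn i) (Inl w) \<psi>"
        using G E by simp
    qed
    have 2: "\<forall>\<phi>\<in>Etr ` \<Delta>. \<not> isat (leI le) (RI R) (\<lambda>i. Inl ` Vp i) (\<lambda>i. Inl ` Vn i) (Inl w) \<phi>"
    proof
      fix \<psi> assume "\<psi> \<in> Etr ` \<Delta>"
      then obtain \<phi> where "\<phi> \<in> \<Delta>" "\<psi> = Etr \<phi>" by blast
      then show "\<not> isat (leI le) (RI R) (\<lambda>i. Inl ` Vp i) (\<lambda>i. Inl ` Vn i) (Inl w) \<psi>"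
        using D E by simp
    qed
    show ?thesis using 1 2 by (rule conjI)
  qed
  then have X: "ick_model (leI le) (RI R) (\<lambda>i. Inl ` Vp i) (\<lambda>i. Inl ` Vn i) \<and>
      (\<forall>\<phi>\<in>Etr ` \<Gamma>. isat (leI le) (RI R) (\<lambda>i. Inl ` Vp i) (\<lambda>i. Inl ` Vn i) (Inl w) \<phi>) \<and>
      (\<forall>\<phi>\<in>Etr ` \<Delta>. \<not> isat (leI le) (RI R) (\<lambda>i. Inl ` Vp i) (\<lambda>i. Inl ` Vn i) (Inl w) \<phi>)"
    using M' by (simp only: simp_thms)
  show False
    apply (rule notE[OF assms[unfolded IntCK_def]])
    apply (rule exI[of _ "leI le"], rule exI[of _ "RI R"], rule exI[of _ "\<lambda>i. Inl ` Vp i"],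
        rule exI[of _ "\<lambda>i. Inl ` Vn i"], rule exI[of _ "Inl w"])
    by (rule X)
qed

theorem proposition9:
  fixes \<Gamma> \<Delta> :: "nform set"
  shows "(N4CK TYPE('w) \<Gamma> \<Delta> \<longrightarrow> IntCK TYPE('w) (Etr ` \<Gamma>) (Etr ` \<Delta>)) \<and>
         (IntCK TYPE('w + 'w \<times> 'w set) (Etr ` \<Gamma>) (Etr ` \<Delta>) \<longrightarrow> N4CK TYPE('w) \<Gamma> \<Delta>)"
  by (intro conjI impI) (erule dir1, erule dir2)

end
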